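(* Let $I$ DMUs have nonnegative nominal output data $Y\in\mathbb{R}^{M\times I}$ and input data $X\in\mathbb{R}^{N\times I}$, fix a DMU $\hat\imath$ and $\sigma\ge0$ with $\sigma\le X_{n\hat\imath}$ for all $n$ and $\sigma\le Y_{mi}$ for all $m$ and all $i\neq\hat\imath$. For perturbations $\Delta\in\mathbb{R}^{M\times I}$, $\nabla\in\mathbb{R}^{N\times I}$ with all entries in $[-\sigma,\sigma]$ and $Y+\Delta\ge0$, $X+\nabla\ge0$, let $E^{\hat\imath}(\Delta,\nabla)=\min\{\theta:(Y+\Delta)\lambda\ge y^{\hat\imath}+\delta_y^{\hat\imath},\ (X+\nabla)\lambda\le\theta(x^{\hat\imath}+\delta_x^{\hat\imath}),\ e^T\lambda=1,\ \lambda\ge0\}$, where $\delta_y^{\hat\imath},\delta_x^{\hat\imath}$ are the $\hat\imath$-th columns of $\Delta,\nabla$. Then the maximum of $E^{\hat\imath}(\Delta,\nabla)$ over all such admissible perturbations is attained by the choice $\Delta_{mi}=-\sigma$, $\nabla_{ni}=\sigma$ for all $i\neq\hat\imath$, and $\Delta_{m\hat\imath}=\sigma$, $\nabla_{n\hat\imath}=-\sigma$, for all $m,n$.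
   Context: Input-oriented BCC (variable returns to scale) DEA: the efficiency score of DMU $k$ with data $(X,Y)$ is $\min\{\theta: Y\lambda\ge y^k,\ X\lambda\le\theta x^k,\ e^T\lambda=1,\ \lambda\ge0\}$, $e$ the all-ones vector, $y^k,x^k$ the $k$-th columns. Box uncertainty of size $\sigma$: each data entry may deviate from its nominal value by at most $\sigma$ (data scaled so the same $\sigma$ applies to all inputs and outputs), and the perturbed data must remain nonnegative (standing assumption of the paper). *)

theory Defs
  imports Complex_Main "HOL-Library.Extended_Real"
begin

text \<open>Input-oriented BCC efficiency score of DMU k: the minimum of the LP,
  rendered as the infimum in the extended reals (equal to the minimum
  whenever the LP has an optimal value).\<close>

definition bcc_eff ::
  "nat \<Rightarrow> nat \<Rightarrow> nat \<Rightarrow> (nat \<Rightarrow> nat \<Rightarrow> real) \<Rightarrow> (nat \<Rightarrow> nat \<Rightarrow> real) \<Rightarrow> nat \<Rightarrow> ereal" where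
  "bcc_eff M N I Y X k = Inf {ereal \<theta> | \<theta>. \<exists>lam :: nat \<Rightarrow> real.
      (\<forall>i<I. 0 \<le> lam i) \<and> (\<Sum>i<I. lam i) = 1 \<and>
      (\<forall>m<M. Y m k \<le> (\<Sum>i<I. Y m i * lam i)) \<and>
      (\<forall>n<N. (\<Sum>i<I. X n i * lam i) \<le> \<theta> * X n k)}"

definition admissible ::
  "real \<Rightarrow> nat \<Rightarrow> nat \<Rightarrow> nat \<Rightarrow> (nat \<Rightarrow> nat \<Rightarrow> real) \<Rightarrow> (nat \<Rightarrow> nat \<Rightarrow> real)
     \<Rightarrow> (nat \<Rightarrow> nat \<Rightarrow> real) \<Rightarrow> (nat \<Rightarrow> nat \<Rightarrow> real) \<Rightarrow> bool" where
  "admissible \<sigma> M N I Y X D G \<longleftrightarrow>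
     (\<forall>m<M. \<forall>i<I. \<bar>D m i\<bar> \<le> \<sigma> \<and> 0 \<le> Y m i + D m i) \<and>
     (\<forall>n<N. \<forall>i<I. \<bar>G n i\<bar> \<le> \<sigma> \<and> 0 \<le> X n i + G n i)"

definition pert_eff ::
  "nat \<Rightarrow> nat \<Rightarrow> nat \<Rightarrow> (nat \<Rightarrow> nat \<Rightarrow> real) \<Rightarrow> (nat \<Rightarrow> nat \<Rightarrow> real) \<Rightarrow> nat
     \<Rightarrow> (nat \<Rightarrow> nat \<Rightarrow> real) \<Rightarrow> (nat \<Rightarrow> nat \<Rightarrow> real) \<Rightarrow> ereal" where
  "pert_eff M N I Y X k D G = bcc_eff M N I (\<lambda>m i. Y m i + D m i) (\<lambda>n i. X n i + G n i) k"

end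

theory Submission
  imports Defs
begin

lemma split_k:
  fixes f :: "nat \<Rightarrow> real"
  assumes "k < I"
  shows "(\<Sum>i<I. f i) = f k + (\<Sum>i\<in>{..<I}-{k}. f i)"
  using assms by (simp add: sum.remove)

lemma out_part:
  fixes a d lam :: "nat \<Rightarrow> real"
  assumes k: "k < I" and lam: "\<forall>i<I. 0 \<le> lam i" and s1: "(\<Sum>i<I. lam i) = 1"
    and dd: "\<forall>i<I. \<bar>d i\<bar> \<le> \<sigma>"
    and w: "a k + \<sigma> \<le> (\<Sum>i<I. (a i + (if i = k then \<sigma> else - \<sigma>)) * lam i)"
  shows "a k + d k \<le> (\<Sum>i<I. (a i + d i) * lam i)"
proof -
  have lk: "lam k \<le> 1"
    using s1 member_le_sum[of k "{..<I}" lam] lam k by auto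
  have e1: "(\<Sum>i<I. (a i + (if i = k then \<sigma> else - \<sigma>)) * lam i)
      = (a k + \<sigma>) * lam k + (\<Sum>i\<in>{..<I}-{k}. (a i - \<sigma>) * lam i)"
    using split_k[OF k] by (simp add: sum.remove[of "{..<I}" k] k)
  have e2: "(\<Sum>i<I. (a i + d i) * lam i) = (a k + d k) * lam k + (\<Sum>i\<in>{..<I}-{k}. (a i + d i) * lam i)"
    using split_k[OF k] by simp
  have m: "(\<Sum>i\<in>{..<I}-{k}. (a i - \<sigma>) * lam i) \<le> (\<Sum>i\<in>{..<I}-{k}. (a i + d i) * lam i)"
  proof (rule sum_mono)
    fix i assume "i \<in> {..<I}-{k}"
    then have "i < I" by auto
    then show "(a i - \<sigma>) * lam i \<le> (a i + d i) * lam i"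
      using dd lam by (intro mult_right_mono) (auto simp: abs_le_iff)
  qed
  have dk: "d k \<le> \<sigma>" using dd k by (auto simp: abs_le_iff)
  have "(a k + \<sigma>) * (lam k - 1) \<le> (a k + d k) * (lam k - 1)"
    using dk lk by (intro mult_right_mono_neg) auto
  then show ?thesis using w e1 e2 m by (simp add: algebra_simps)
qed

lemma in_part:
  fixes a g lam :: "nat \<Rightarrow> real"
  assumes k: "k < I" and lam: "\<forall>i<I. 0 \<le> lam i"
    and gg: "\<forall>i<I. \<bar>g i\<bar> \<le> \<sigma>"
    and ge: "lam k \<le> \<theta>"
    and w: "(\<Sum>i<I. (a i + (if i = k then - \<sigma> else \<sigma>)) * lam i) \<le> \<theta> * (a k - \<sigma>)"
  shows "(\<Sum>i<I. (a i + g i) * lam i) \<le> \<theta> * (a k + g k)"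
proof -
  have e1: "(\<Sum>i<I. (a i + (if i = k then - \<sigma> else \<sigma>)) * lam i)
      = (a k - \<sigma>) * lam k + (\<Sum>i\<in>{..<I}-{k}. (a i + \<sigma>) * lam i)"
    using split_k[OF k] by (simp add: sum.remove[of "{..<I}" k] k)
  have e2: "(\<Sum>i<I. (a i + g i) * lam i) = (a k + g k) * lam k + (\<Sum>i\<in>{..<I}-{k}. (a i + g i) * lam i)"
    using split_k[OF k] by simp
  have m: "(\<Sum>i\<in>{..<I}-{k}. (a i + g i) * lam i) \<le> (\<Sum>i\<in>{..<I}-{k}. (a i + \<sigma>) * lam i)"
  proof (rule sum_mono)
    fix i assume "i \<in> {..<I}-{k}"
    then have "i < I" by auto
    then show "(a i + g i) * lam i \<le> (a i + \<sigma>) * lam i"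
      using gg lam by (intro mult_right_mono) (auto simp: abs_le_iff)
  qed
  have gk: "- \<sigma> \<le> g k" using gg k by (auto simp: abs_le_iff)
  have "(\<theta> - lam k) * (a k - \<sigma>) \<le> (\<theta> - lam k) * (a k + g k)"
    using gk ge by (intro mult_left_mono) auto
  then show ?thesis using w e1 e2 m by (simp add: algebra_simps)
qed

lemma theta_ge:
  fixes a lam :: "nat \<Rightarrow> real"
  assumes k: "k < I" and lam: "\<forall>i<I. 0 \<le> lam i"
    and pos: "\<forall>i<I. 0 \<le> a i" and s0: "0 \<le> \<sigma>" and sk: "\<sigma> < a k"
    and w: "(\<Sum>i<I. (a i + (if i = k then - \<sigma> else \<sigma>)) * lam i) \<le> \<theta> * (a k - \<sigma>)"
  shows "lam k \<le> \<theta>"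
proof -
  have e1: "(\<Sum>i<I. (a i + (if i = k then - \<sigma> else \<sigma>)) * lam i)
      = (a k - \<sigma>) * lam k + (\<Sum>i\<in>{..<I}-{k}. (a i + \<sigma>) * lam i)"
    using split_k[OF k] by (simp add: sum.remove[of "{..<I}" k] k)
  have "0 \<le> (\<Sum>i\<in>{..<I}-{k}. (a i + \<sigma>) * lam i)"
    using pos lam s0 by (intro sum_nonneg) auto
  then have "(a k - \<sigma>) * lam k \<le> (a k - \<sigma>) * \<theta>" using w e1 by (simp add: algebra_simps)
  then show ?thesis using sk by simp
qed

theorem theorem3:
  fixes M N I k :: nat and \<sigma> :: real
    and Y X :: "nat \<Rightarrow> nat \<Rightarrow> real"
  assumes "k < I"
    and "\<forall>m<M. \<forall>i<I. 0 \<le> Y m i"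
    and "\<forall>n<N. \<forall>i<I. 0 \<le> X n i"
    and "0 \<le> \<sigma>"
    and "\<forall>n<N. \<sigma> \<le> X n k"
    and "\<forall>m<M. \<forall>i<I. i \<noteq> k \<longrightarrow> \<sigma> \<le> Y m i"
    and "\<exists>n<N. \<sigma> < X n k"
  shows "admissible \<sigma> M N I Y X (\<lambda>m i. if i = k then \<sigma> else - \<sigma>) (\<lambda>n i. if i = k then - \<sigma> else \<sigma>)
    \<and> (\<forall>D G. admissible \<sigma> M N I Y X D G \<longrightarrow>
         pert_eff M N I Y X k D G
           \<le> pert_eff M N I Y X k (\<lambda>m i. if i = k then \<sigma> else - \<sigma>) (\<lambda>n i. if i = k then - \<sigma> else \<sigma>))"
proof
  show "admissible \<sigma> M N I Y X (\<lambda>m i. if i = k then \<sigma> else - \<sigma>) (\<lambda>n i. if i = k then - \<sigma> else \<sigma>)"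
    using assms unfolding admissible_def by (auto simp: add_nonneg_nonneg)
next
  obtain n0 where n0: "n0 < N" "\<sigma> < X n0 k" using assms(7) by blast
  show "\<forall>D G. admissible \<sigma> M N I Y X D G \<longrightarrow>
         pert_eff M N I Y X k D G
           \<le> pert_eff M N I Y X k (\<lambda>m i. if i = k then \<sigma> else - \<sigma>) (\<lambda>n i. if i = k then - \<sigma> else \<sigma>)"
  proof (intro allI impI)
    fix D G assume ad: "admissible \<sigma> M N I Y X D G"
    show "pert_eff M N I Y X k D G
           \<le> pert_eff M N I Y X k (\<lambda>m i. if i = k then \<sigma> else - \<sigma>) (\<lambda>n i. if i = k then - \<sigma> else \<sigma>)"
      unfolding pert_eff_def bcc_eff_def
    proof (rule Inf_superset_mono, safe)
      fix \<theta> lam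
      assume lam: "\<forall>i<I. 0 \<le> lam i" and s1: "(\<Sum>i<I. lam i) = 1"
        and wy: "\<forall>m<M. Y m k + (if k = k then \<sigma> else - \<sigma>)
             \<le> (\<Sum>i<I. (Y m i + (if i = k then \<sigma> else - \<sigma>)) * lam i)"
        and wx: "\<forall>n<N. (\<Sum>i<I. (X n i + (if i = k then - \<sigma> else \<sigma>)) * lam i)
             \<le> \<theta> * (X n k + (if k = k then - \<sigma> else \<sigma>))"
      have ge: "lam k \<le> \<theta>"
        using theta_ge[of k I lam "X n0" \<sigma> \<theta>] assms(1,3,4) lam n0 wx by simp
      show "\<exists>\<theta>'. ereal \<theta> = ereal \<theta>' \<and> (\<exists>lam. (\<forall>i<I. 0 \<le> lam i) \<and> (\<Sum>i<I. lam i) = 1 \<and>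
          (\<forall>m<M. Y m k + D m k \<le> (\<Sum>i<I. (Y m i + D m i) * lam i)) \<and>
          (\<forall>n<N. (\<Sum>i<I. (X n i + G n i) * lam i) \<le> \<theta>' * (X n k + G n k)))"
      proof (intro exI[of _ \<theta>] conjI refl exI[of _ lam] lam s1 allI impI)
        fix m assume m: "m < M"
        show "Y m k + D m k \<le> (\<Sum>i<I. (Y m i + D m i) * lam i)"
          using out_part[OF assms(1) lam s1, of "D m" \<sigma> "Y m"] wy m ad
          unfolding admissible_def by simp
      next
        fix n assume n: "n < N"
        show "(\<Sum>i<I. (X n i + G n i) * lam i) \<le> \<theta> * (X n k + G n k)"
          using in_part[OF assms(1) lam, of "G n" \<sigma> \<theta> "X n"] wx n ad ge
          unfolding admissible_def by simp
      qed
    qed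
  qed
qed

end
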